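(* Let $f(n)$ be the number of permutations of $[n]$ with all valleys even and all peaks odd ($f(0)=1$). Then \[ \sum_{n\ge0} f(n)\frac{x^n}{n!}=\left[\sum_{n=0}^{\infty}\left(E_{3n}\frac{x^{3n}}{(3n)!}-E_{3n+1}\frac{x^{3n+1}}{(3n+1)!}\right)\right]^{-1}=\Bigl(1-E_1x+E_3\tfrac{x^3}{3!}-E_4\tfrac{x^4}{4!}+E_6\tfrac{x^6}{6!}-\cdots\Bigr)^{-1}, \] and this also equals $\dfrac{3\sin(\frac12x)+3\cosh(\frac12\sqrt3x)}{3\cos(\frac12x)-\sqrt3\sinh(\frac12\sqrt3x)}$.
   Context: The Euler numbers $E_n$ are defined by $\sum_{n\ge0}E_nx^n/n!=\sec x+\tan x$. For a permutation $\pi_1\cdots\pi_n$, index $i\in\{2,\dots,n-1\}$ is a peak if $\pi_{i-1}<\pi_i>\pi_{i+1}$ and a valley if $\pi_{i-1}>\pi_i<\pi_{i+1}$. *)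

theory Defs
  imports "HOL-Analysis.Analysis" "HOL-Computational_Algebra.Formal_Power_Series"
begin

definition euler_number :: "nat \<Rightarrow> real" where
  "euler_number n = fact n * fps_nth (inverse (fps_cos 1) + fps_tan 1) n"

text \<open>Permutations of [n] = {1..n} in one-line notation \<pi>_1 ... \<pi>_n, stored as a list
  (list position k holds \<pi>_(k+1)).\<close>
definition perms_of :: "nat \<Rightarrow> nat list set" where
  "perms_of n = {xs. distinct xs \<and> set xs = {1..n}}"

text \<open>Index i (1-based, 2 \<le> i \<le> n-1) is a peak / valley of \<pi>_1...\<pi>_n.\<close>
definition is_peak :: "nat list \<Rightarrow> nat \<Rightarrow> bool" where
  "is_peak xs i \<longleftrightarrow> 2 \<le> i \<and> i + 1 \<le> length xs \<and>
     xs ! (i - 2) < xs ! (i - 1) \<and> xs ! (i - 1) > xs ! i"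

definition is_valley :: "nat list \<Rightarrow> nat \<Rightarrow> bool" where
  "is_valley xs i \<longleftrightarrow> 2 \<le> i \<and> i + 1 \<le> length xs \<and>
     xs ! (i - 2) > xs ! (i - 1) \<and> xs ! (i - 1) < xs ! i"

definition f_count :: "nat \<Rightarrow> nat" where
  "f_count n = card {xs \<in> perms_of n. (\<forall>i. is_valley xs i \<longrightarrow> even i) \<and>
                                      (\<forall>i. is_peak xs i \<longrightarrow> odd i)}"

end

theory Submission
  imports Defs
begin
unbundle no vec_syntax
notation fps_nth (infixl \<open>$\<close> 75)

lemma algA:
  fixes sn cs hh rr a b g gg ap sh ch N W RN RW Np Wp :: "'a::idom"
  assumes r: "rr * rr = 3" "ch * ch - sh * sh = 1" "cs * cs+sn * sn=1"
  and d: "N = 3 * sn+3 * ch" "W = 3 * cs - rr * sh" "RN = 3 * ch - 3 * sn" "RW = 3 * cs + rr * sh"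
  "Np = hh * (3 * cs + 3 * rr * sh)" "Wp = -(hh * N)"
  and h: "a * W = N" "ap * W + a * Wp = Np" "b * RW = RN" "g * W = 2 * rr * sh"  "gg * RW = -(2 * rr * sh)"
  shows "ap  *  (W * W * RW) = (hh * (a+b) * a + hh * (g-gg)) * (W * W * RW)"
proof -
  have e: "ap * W = Np - a * Wp" using h(2) by (simp add: algebra_simps)
  have "ap  *  (W * W * RW) = (ap * W) * W * RW" by (simp add: ac_simps)
  also have "\<dots> = (Np - a * Wp) * W * RW" by (simp add: e)
  also have "\<dots> = Np * W * RW - Wp * (a * W) * RW" by (simp add: algebra_simps)
  also have "\<dots> = (Np * W - Wp * N) * RW" unfolding h(1)[symmetric] by (simp add: algebra_simps)
  finally have 1: "ap  *  (W * W * RW) = (Np * W - Wp * N) * RW" .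
  have "(hh * (a+b) * a + hh * (g-gg)) * (W * W * RW) = hh * ((a * W) * (a * W) * RW + (b * RW) * (a * W) * W) + hh * ((g * W) * W * RW - (gg * RW) * W * W)"
    by (simp add: algebra_simps)
  also have "\<dots> = hh * (N * N * RW + RN * N * W) + hh * (2 * rr * sh * W * RW + 2 * rr * sh * W * W)"
    by (simp add: h(1,3,4,5))
  finally have 2: "(hh * (a+b) * a + hh * (g-gg)) * (W * W * RW) = hh * (N * N * RW + RN * N * W) + hh * (2 * rr * sh * W * RW + 2 * rr * sh * W * W)" .
  have 4: "(3 * cs + 3 * rr * sh)  *  RW = RN * N + 2 * rr * sh * (RW + W)"
  proof -
    have "(3 * cs + 3 * rr * sh)  *  RW - (RN * N + 2 * rr * sh * (RW + W)) = 9 * (cs * cs+sn * sn) - 9 * (ch * ch - sh * sh) + 3 * sh * sh * (rr * rr-3)"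
      unfolding d by algebra
    then show ?thesis using r by simp
  qed
  have 3: "(Np * W - Wp * N) * RW = hh * (N * N * RW + RN * N * W) + hh * (2 * rr * sh * W * RW + 2 * rr * sh * W * W)"
  proof -
    have "(Np * W - Wp * N) * RW = hh  *  W  *  ((3 * cs + 3 * rr * sh)  *  RW) + hh * (N * N * RW)" unfolding d(5,6) by algebra
    also have "\<dots> = hh  *  W  *  (RN * N + 2 * rr * sh * (RW + W)) + hh * (N * N * RW)" by (simp add: 4)
    also have "\<dots> = hh * (N * N * RW + RN * N * W) + hh * (2 * rr * sh * W * RW + 2 * rr * sh * W * W)" by algebra
    finally show ?thesis .
  qed
  show ?thesis using 1 2 3 by simp
qed

lemma algG:
  fixes sn cs hh rr a b g gp sh ch N W RN RW Np Wp :: "'a::idom"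
  assumes r: "rr * rr = 3"
  and d: "N = 3 * sn+3 * ch" "W = 3 * cs - rr * sh" "RN = 3 * ch - 3 * sn" "RW = 3 * cs + rr * sh"
   "Wp = -(hh * N)"
  and h: "a * W = N" "b * RW = RN" "g * W = 2 * rr * sh" "gp * W + g * Wp = 2 * rr * (rr * hh * ch)"
  shows "gp  *  (W * W * RW) = (hh * (a+b) * (g+1)) * (W * W * RW)"
proof -
  have e: "gp * W = 2 * rr * (rr * hh * ch) - g * Wp" using h(4) by (simp add: algebra_simps)
  have "gp  *  (W * W * RW) = (gp * W) * W * RW" by (simp add: ac_simps)
  also have "\<dots> = (2 * rr * (rr * hh * ch) - g * Wp) * W * RW" by (simp add: e)
  also have "\<dots> = 2 * rr * (rr * hh * ch) * W * RW - Wp * (g * W) * RW" by (simp add: algebra_simps)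
  also have "\<dots> = (2 * rr * (rr * hh * ch) * W - Wp * (2 * rr * sh)) * RW" unfolding h(3)[symmetric] by (simp add: algebra_simps)
  finally have 1: "gp  *  (W * W * RW) = (2 * rr * (rr * hh * ch) * W - Wp * (2 * rr * sh)) * RW" .
  have "(hh * (a+b) * (g+1)) * (W * W * RW) = hh * ((a * W) * ((g * W)+W) * RW + (b * RW) * ((g * W)+W) * W)"
    by (simp add: algebra_simps)
  also have "\<dots> = hh * (N * (2 * rr * sh+W) * RW + RN * (2 * rr * sh+W) * W)"
    by (simp add: h(1,2,3))
  finally have 2: "(hh * (a+b) * (g+1)) * (W * W * RW) = hh * (N * (2 * rr * sh+W) * RW + RN * (2 * rr * sh+W) * W)" .
  have 5: "2 * rr * (rr * ch * W + N * sh) = N * RW + RN * W"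
  proof -
    have "2 * rr * (rr * ch * W + N * sh) - (N * RW + RN * W) = (6 * cs * ch - 2 * rr * ch * sh) * (rr * rr-3)" unfolding d by algebra
    then show ?thesis using r by simp
  qed
  have 3: "(2 * rr * (rr * hh * ch) * W - Wp * (2 * rr * sh)) * RW = hh * (N * (2 * rr * sh+W) * RW + RN * (2 * rr * sh+W) * W)"
  proof -
    have "(2 * rr * (rr * hh * ch) * W - Wp * (2 * rr * sh)) * RW = hh * RW * (2 * rr * (rr * ch * W + N * sh))" unfolding d(5) by algebra
    also have "\<dots> = hh * RW * (N * RW + RN * W)" by (simp add: 5)
    also have "\<dots> = hh * (N * (2 * rr * sh+W) * RW + RN * (2 * rr * sh+W) * W)" unfolding d by algebra
    finally show ?thesis .
  qed
  show ?thesis using 1 2 3 by metis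
qed

lemma algD:
  fixes sn cs hh rr sh ch P Q Pp Qp S Sp :: "'a::idom"
  assumes r: "rr * rr = 3" "2 * hh = 1" "ch * ch - sh * sh = 1" "cs * cs + sn * sn = 1"
  and d: "S = ch + sn" "Sp = rr * hh * sh + hh * cs"
  and h: "P * S = cs" "Q * S = sh" "Pp * S + P * Sp = - (hh * sn)" "Qp * S + Q * Sp = rr * hh * ch"
  shows "2 * Pp * (S * S) = (- (hh * (1 + P * P - Q * Q)) - rr * (P * Q)) * (S * S)"
    and "2 * Qp * (S * S) = (rr * hh * (1 + P * P - Q * Q) - P * Q) * (S * S)"
proof -
  have e1: "Pp * S = - (hh * sn) - P * Sp" using h(3) by (simp add: algebra_simps)
  have "2 * Pp * (S * S) = 2 * (Pp * S) * S" by (simp add: ac_simps)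
  also have "\<dots> = 2 * (- (hh * sn) - P * Sp) * S" by (simp add: e1)
  also have "\<dots> = - 2 * hh * sn * S - 2 * Sp * (P * S)" by (simp add: algebra_simps)
  also have "\<dots> = - 2 * hh * sn * S - 2 * Sp * cs" by (simp add: h(1))
  finally have 1: "2 * Pp * (S * S) = - 2 * hh * sn * S - 2 * Sp * cs" .
  have "(- (hh * (1 + P * P - Q * Q)) - rr * (P * Q)) * (S * S)
     = - (hh * (S * S + (P * S) * (P * S) - (Q * S) * (Q * S))) - rr * ((P * S) * (Q * S))"
    by (simp add: algebra_simps)
  also have "\<dots> = - (hh * (S * S + cs * cs - sh * sh)) - rr * (cs * sh)" by (simp add: h(1,2))
  finally have 2: "(- (hh * (1 + P * P - Q * Q)) - rr * (P * Q)) * (S * S) = - (hh * (S * S + cs * cs - sh * sh)) - rr * (cs * sh)" .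
  have 3: "(- 2 * hh * sn * S - 2 * Sp * cs) - (- (hh * (S * S + cs * cs - sh * sh)) - rr * (cs * sh))
    = - hh * (cs * cs + sn * sn - 1) + hh * (ch * ch - sh * sh - 1) + rr * cs * sh * (1 - 2 * hh)"
    unfolding d by algebra
  show "2 * Pp * (S * S) = (- (hh * (1 + P * P - Q * Q)) - rr * (P * Q)) * (S * S)"
    using 1 2 3 r by simp
next
  have e1: "Qp * S = rr * hh * ch - Q * Sp" using h(4) by (simp add: algebra_simps)
  have "2 * Qp * (S * S) = 2 * (Qp * S) * S" by (simp add: ac_simps)
  also have "\<dots> = 2 * (rr * hh * ch - Q * Sp) * S" by (simp add: e1)
  also have "\<dots> = 2 * rr * hh * ch * S - 2 * Sp * (Q * S)" by (simp add: algebra_simps)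
  also have "\<dots> = 2 * rr * hh * ch * S - 2 * Sp * sh" by (simp add: h(2))
  finally have 1: "2 * Qp * (S * S) = 2 * rr * hh * ch * S - 2 * Sp * sh" .
  have "(rr * hh * (1 + P * P - Q * Q) - P * Q) * (S * S)
     = rr * hh * (S * S + (P * S) * (P * S) - (Q * S) * (Q * S)) - ((P * S) * (Q * S))"
    by (simp add: algebra_simps)
  also have "\<dots> = rr * hh * (S * S + cs * cs - sh * sh) - (cs * sh)" by (simp add: h(1,2))
  finally have 2: "(rr * hh * (1 + P * P - Q * Q) - P * Q) * (S * S) = rr * hh * (S * S + cs * cs - sh * sh) - (cs * sh)" .
  have 3: "(2 * rr * hh * ch * S - 2 * Sp * sh) - (rr * hh * (S * S + cs * cs - sh * sh) - (cs * sh))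
    = rr * hh * (ch * ch - sh * sh - 1) - rr * hh * (cs * cs + sn * sn - 1) + cs * sh * (1 - 2 * hh)"
    unfolding d by algebra
  show "2 * Qp * (S * S) = (rr * hh * (1 + P * P - Q * Q) - P * Q) * (S * S)"
    using 1 2 3 r by simp
qed

lemma algT:
  fixes c1 s1 i :: "'a::idom"
  assumes "c1 * i = 1" "c1 * c1 + s1 * s1 = 1"
  shows "2 * (s1 * i * i + (c1 * i + s1 * (s1 * i * i))) = 1 + (i + s1 * i) * (i + s1 * i)"
proof -
  have "2 * (s1 * i * i + (c1 * i + s1 * (s1 * i * i))) - (1 + (i + s1 * i) * (i + s1 * i))
    = 2 * (c1 * i - 1) - (c1 * i - 1) * (c1 * i + 1) + (c1 * c1 + s1 * s1 - 1) * (i * i)"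
    by algebra
  also have "\<dots> = 0" using assms by simp
  finally show ?thesis by (simp only: right_minus_eq)
qed

lemma fps_div2: "(x::real fps) / 2 = fps_const (1/2) * x"
proof -
  have "inverse (2::real fps) = fps_const (1/2)"
    by (simp add: inverse_fps_numeral)
  then show ?thesis by (simp add: fps_divide_unit mult.commute)
qed

definition "e1 = fps_exp (sqrt 3 / 2 :: real)"
definition "e2 = fps_exp (- (sqrt 3 / 2) :: real)"
definition "sn = fps_sin (1/2 :: real)"
definition "cs = fps_cos (1/2 :: real)"
definition "hh = fps_const (1/2 :: real)"
definition "rr = fps_const (sqrt 3 :: real)"
definition "shy = (fps_exp (sqrt 3 / 2) - fps_exp (- (sqrt 3 / 2))) / (2::real fps)"
definition "chy = (fps_exp (sqrt 3 / 2) + fps_exp (- (sqrt 3 / 2))) / (2::real fps)"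
definition "NN = 3 * fps_sin (1/2) + 3 * chy"
definition "WW = 3 * fps_cos (1/2) - fps_const (sqrt 3) * shy"
definition "RW = 3 * cs + rr * shy"
definition "RN = 3 * chy - 3 * sn"

lemma shy_alt: "shy = hh * (e1 - e2)" by (simp add: shy_def fps_div2 hh_def e1_def e2_def)
lemma chy_alt: "chy = hh * (e1 + e2)" by (simp add: chy_def fps_div2 hh_def e1_def e2_def)
lemma NN_alt: "NN = 3 * sn + 3 * chy" by (simp add: NN_def sn_def)
lemma WW_alt: "WW = 3 * cs - rr * shy" by (simp add: WW_def cs_def rr_def)

lemma hh2: "2 * hh = 1" by (simp add: hh_def numeral_fps_const)
lemma rr2: "rr * rr = 3" by (simp add: rr_def numeral_fps_const)
lemma e12: "e1 * e2 = 1" unfolding e1_def e2_def by (simp flip: fps_exp_add_mult)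
lemma sc1: "cs * cs + sn * sn = 1"
  using fps_sin_cos_sum_of_squares[of "1/2::real"] by (simp add: sn_def cs_def power2_eq_square)
lemma chsh1: "chy * chy - shy * shy = 1"
proof -
  have "chy * chy - shy * shy = (2 * hh) * (2 * hh) * (e1 * e2)" unfolding chy_alt shy_alt by algebra
  then show ?thesis by (simp add: hh2 e12)
qed
lemma d_rr: "fps_deriv rr = 0" by (simp add: rr_def)
lemma d_hh: "fps_deriv hh = 0" by (simp add: hh_def)
lemma d_e1: "fps_deriv e1 = rr * hh * e1"
  by (simp add: e1_def rr_def hh_def)
lemma d_e2: "fps_deriv e2 = - (rr * hh * e2)"
  by (simp add: e2_def rr_def hh_def flip: fps_const_neg)
lemma d_sn: "fps_deriv sn = hh * cs"
  by (simp add: sn_def cs_def hh_def fps_sin_deriv)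
lemma d_cs: "fps_deriv cs = - (hh * sn)"
  by (simp add: sn_def cs_def hh_def fps_cos_deriv flip: fps_const_neg)
lemma d_shy: "fps_deriv shy = rr * hh * chy"
  unfolding shy_alt chy_alt by (simp add: d_e1 d_e2 hh_def algebra_simps)
lemma d_chy: "fps_deriv chy = rr * hh * shy"
  unfolding shy_alt chy_alt by (simp add: d_e1 d_e2 hh_def algebra_simps)
lemma d_NN: "fps_deriv NN = hh * (3 * cs + 3 * rr * shy)"
  unfolding NN_alt by (simp add: d_sn d_chy algebra_simps)
lemma d_WW: "fps_deriv WW = - (hh * NN)"
proof -
  have "fps_deriv WW = - (3 * hh * sn) - (rr * rr) * hh * chy" unfolding WW_alt
    by (simp add: d_cs d_shy d_rr algebra_simps)
  then show ?thesis unfolding NN_alt rr2 by (simp add: algebra_simps eq_neg_iff_add_eq_0)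
qed

lemma WW0: "WW $ 0 = 3" by (simp add: WW_def shy_def fps_div2)
lemma NN0: "NN $ 0 = 3" by (simp add: NN_def chy_def fps_div2)


definition RR :: "real fps \<Rightarrow> real fps" where "RR X = X oo (- fps_X)"
lemma RR_nth: "RR X $ n = (-1)^n * X $ n"
  by (simp add: RR_def fps_compose_uminus')
lemma RR_mult: "RR (X * Y) = RR X * RR Y"
  unfolding RR_def by (rule fps_compose_mult_distrib) simp
lemma RR_add: "RR (X + Y) = RR X + RR Y" by (rule fps_ext) (simp add: RR_nth algebra_simps)
lemma RR_diff: "RR (X - Y) = RR X - RR Y" by (rule fps_ext) (simp add: RR_nth algebra_simps)
lemma RR_const: "RR (fps_const c) = fps_const c"
  by (rule fps_ext) (simp add: RR_nth)
lemma RR_numeral: "RR (numeral k) = numeral k"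
  by (simp add: numeral_fps_const RR_const)
lemma RR_sn: "RR sn = - sn"
  by (rule fps_ext) (auto simp: RR_nth sn_def fps_sin_def elim!: oddE)
lemma RR_cs: "RR cs = cs"
  by (rule fps_ext) (auto simp: RR_nth cs_def fps_cos_def elim!: evenE)
lemma RR_e1: "RR e1 = e2"
  by (rule fps_ext) (simp add: RR_nth e1_def e2_def power_minus' field_simps)
lemma RR_e2: "RR e2 = e1"
  by (rule fps_ext) (simp add: RR_nth e1_def e2_def power_minus' field_simps)
lemma RR_shy: "RR shy = - shy"
  unfolding shy_alt hh_def by (simp add: RR_mult RR_const RR_diff RR_e1 RR_e2 algebra_simps)
lemma RR_chy: "RR chy = chy"
  unfolding chy_alt hh_def by (simp add: RR_mult RR_const RR_add RR_e1 RR_e2 algebra_simps)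
lemma RR_WW: "RR WW = RW"
  unfolding WW_alt RW_def rr_def by (simp add: RR_mult RR_const RR_diff RR_numeral RR_cs RR_shy)
lemma RR_NN: "RR NN = RN"
  unfolding NN_alt RN_def by (simp add: RR_mult RR_add RR_numeral RR_sn RR_chy)

definition Ev :: "real fps \<Rightarrow> real fps" where "Ev X = Abs_fps (\<lambda>n. if even n then X$n else 0)"
definition Od :: "real fps \<Rightarrow> real fps" where "Od X = Abs_fps (\<lambda>n. if even n then 0 else X$n)"
lemma Ev_RR: "Ev X = hh * (X + RR X)"
  by (rule fps_ext) (simp add: Ev_def hh_def RR_nth)
lemma Od_RR: "Od X = hh * (X - RR X)"
  by (rule fps_ext) (simp add: Od_def hh_def RR_nth)

definition "Astar = NN / WW"
definition "Gstar = (2 * rr * shy) / WW"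

lemma div_mult_cancel_fps: "(Y::real fps) $ 0 \<noteq> 0 \<Longrightarrow> (X / Y) * Y = X"
  by (simp add: fps_divide_unit inverse_mult_eq_1 mult.assoc)

lemma Astar_eq: "Astar * WW = NN" unfolding Astar_def by (rule div_mult_cancel_fps) (simp add: WW0)
lemma Gstar_eq: "Gstar * WW = 2 * rr * shy" unfolding Gstar_def by (rule div_mult_cancel_fps) (simp add: WW0)

lemma Astar_ode: "fps_deriv Astar = Ev Astar * Astar + Od Gstar"
proof -
  have h1: "Astar * WW = NN" by (rule Astar_eq)
  have h2: "fps_deriv Astar * WW + Astar * fps_deriv WW = fps_deriv NN"
    using arg_cong[OF h1, of fps_deriv] by (simp add: algebra_simps)
  have h3: "RR Astar * RW = RN" using arg_cong[OF h1, of RR] by (simp add: RR_mult RR_WW RR_NN)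
  have h4: "Gstar * WW = 2 * rr * shy" by (rule Gstar_eq)
  have h5: "RR Gstar * RW = - (2 * rr * shy)" using arg_cong[OF h4, of RR]
    by (simp add: RR_mult RR_WW RR_numeral RR_shy rr_def RR_const)
  have M: "fps_deriv Astar * (WW * WW * RW) = (hh * (Astar + RR Astar) * Astar + hh * (Gstar - RR Gstar)) * (WW * WW * RW)"
    by (rule algA[OF rr2 chsh1 sc1 NN_alt WW_alt RN_def RW_def d_NN d_WW h1 h2 h3 h4 h5])
  have "RW $ 0 = 3" by (simp add: RW_def cs_def shy_def fps_div2)
  then have "WW * WW * RW \<noteq> 0" using WW0 by (auto dest!: arg_cong[where f="\<lambda>x. x $ 0"])
  then have "fps_deriv Astar = hh * (Astar + RR Astar) * Astar + hh * (Gstar - RR Gstar)"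
    using M by simp
  then show ?thesis by (simp add: Ev_RR Od_RR)
qed

lemma Gstar_ode: "fps_deriv Gstar = Ev Astar * (Gstar + 1)"
proof -
  have h1: "Astar * WW = NN" by (rule Astar_eq)
  have h3: "RR Astar * RW = RN" using arg_cong[OF h1, of RR] by (simp add: RR_mult RR_WW RR_NN)
  have h4: "Gstar * WW = 2 * rr * shy" by (rule Gstar_eq)
  have h2: "fps_deriv Gstar * WW + Gstar * fps_deriv WW = 2 * rr * (rr * hh * chy)"
    using arg_cong[OF h4, of fps_deriv] by (simp add: algebra_simps rr_def d_shy)
  have M: "fps_deriv Gstar * (WW * WW * RW) = (hh * (Astar + RR Astar) * (Gstar + 1)) * (WW * WW * RW)"
    by (rule algG[OF rr2 NN_alt WW_alt RN_def RW_def d_WW h1 h3 h4 h2])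
  have "RW $ 0 = 3" by (simp add: RW_def cs_def shy_def fps_div2)
  then have "WW * WW * RW \<noteq> 0" using WW0 by (auto dest!: arg_cong[where f="\<lambda>x. x $ 0"])
  then have "fps_deriv Gstar = hh * (Astar + RR Astar) * (Gstar + 1)"
    using M by simp
  then show ?thesis by (simp add: Ev_RR)
qed



lemma mult_nth_cong:
  assumes "\<forall>k\<le>n. X $ k = X' $ k" "\<forall>k\<le>n. Y $ k = Y' $ k"
  shows "(X * Y) $ n = (X' * Y') $ n"
  unfolding fps_mult_nth using assms by (intro sum.cong) auto

lemma sys_unique:
  assumes a1: "fps_deriv A1 = Ev A1 * A1 + Od G1" and g1: "fps_deriv G1 = Ev A1 * (G1 + 1)"
  and a2: "fps_deriv A2 = Ev A2 * A2 + Od G2" and g2: "fps_deriv G2 = Ev A2 * (G2 + 1)"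
  and i: "A1 $ 0 = A2 $ 0" "G1 $ 0 = G2 $ 0"
  shows "A1 = A2"
proof -
  have "\<forall>k\<le>n. A1 $ k = A2 $ k \<and> G1 $ k = G2 $ k" for n
  proof (induction n)
    case 0 then show ?case using i by simp
  next
    case (Suc n)
    have EA: "\<forall>k\<le>n. Ev A1 $ k = Ev A2 $ k" using Suc by (simp add: Ev_def)
    have AA: "\<forall>k\<le>n. A1 $ k = A2 $ k" using Suc by simp
    have GG: "\<forall>k\<le>n. (G1 + 1) $ k = (G2 + 1) $ k" using Suc by simp
    have "fps_deriv A1 $ n = fps_deriv A2 $ n"
      unfolding a1 a2 fps_add_nth using mult_nth_cong[OF EA AA] Suc by (simp add: Od_def)
    then have sa: "A1 $ Suc n = A2 $ Suc n" by simp
    have "fps_deriv G1 $ n = fps_deriv G2 $ n"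
      unfolding g1 g2 using mult_nth_cong[OF EA GG] by simp
    then have sg: "G1 $ Suc n = G2 $ Suc n" by simp
    show ?case using Suc sa sg by (auto simp: le_Suc_eq)
  qed
  then show ?thesis by (intro fps_ext) blast
qed

lemma rec_to_ode:
  fixes f e :: "nat \<Rightarrow> nat"
  assumes R1: "\<And>n. f (Suc n) = (\<Sum>j=0..n. if even j then (n choose j) * f j * f (n-j) else 0) + (if odd n then e n else 0)"
  and R2: "\<And>n. e (Suc n) = (\<Sum>j=0..n. if even j then (n choose j) * f j * e (n-j) else 0) + (if even n then f n else 0)"
  defines "Af \<equiv> Abs_fps (\<lambda>n. real (f n) / fact n)" and "Gf \<equiv> Abs_fps (\<lambda>n. real (e n) / fact n)"
  shows "fps_deriv Af = Ev Af * Af + Od Gf" "fps_deriv Gf = Ev Af * (Gf + 1)"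
proof -
  have key: "real (n choose j) * x * y / fact n = (x / fact j) * (y / fact (n - j))" if "j \<le> n" for n j x y
    using that by (simp add: binomial_fact field_simps)
  show "fps_deriv Af = Ev Af * Af + Od Gf"
  proof (rule fps_ext)
    fix n
    have "fps_deriv Af $ n = real (f (Suc n)) / fact n"
      by (simp add: Af_def fact_Suc field_simps del: of_nat_Suc)
    also have "\<dots> = (\<Sum>j=0..n. if even j then real (n choose j) * f j * f (n-j) / fact n else 0)
                     + (if odd n then real (e n) / fact n else 0)"
      by (subst R1) (auto simp add: sum_divide_distrib add_divide_distrib of_nat_sum intro!: sum.cong)
    also have "\<dots> = (Ev Af * Af + Od Gf) $ n"
      by (auto simp add: fps_mult_nth Ev_def Od_def Af_def Gf_def key intro!: sum.cong)
    finally show "fps_deriv Af $ n = (Ev Af * Af + Od Gf) $ n" .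
  qed
  show "fps_deriv Gf = Ev Af * (Gf + 1)"
  proof (rule fps_ext)
    fix n
    have "fps_deriv Gf $ n = real (e (Suc n)) / fact n"
      by (simp add: Gf_def fact_Suc field_simps del: of_nat_Suc)
    also have "\<dots> = (\<Sum>j=0..n. if even j then real (n choose j) * f j * e (n-j) / fact n else 0)
                     + (if even n then real (f n) / fact n else 0)"
      by (subst R2) (auto simp add: sum_divide_distrib add_divide_distrib of_nat_sum intro!: sum.cong)
    also have "\<dots> = (Ev Af * Gf + Ev Af) $ n"
      by (auto simp add: fps_mult_nth Ev_def Af_def Gf_def key intro!: sum.cong)
    also have "\<dots> = (Ev Af * (Gf + 1)) $ n" by (simp add: algebra_simps)
    finally show "fps_deriv Gf $ n = (Ev Af * (Gf + 1)) $ n" .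
  qed
qed



definition "TT = inverse (fps_cos (1::real)) + fps_tan 1"

lemma TT_ode: "2 * fps_deriv TT = 1 + TT * TT"
proof -
  define c1 where "c1 = fps_cos (1::real)"
  define s1 where "s1 = fps_sin (1::real)"
  define i where "i = inverse c1"
  have c10: "c1 $ 0 \<noteq> 0" by (simp add: c1_def)
  have ci: "c1 * i = 1" unfolding i_def using c10 by (simp add: inverse_mult_eq_1')
  have cs1: "c1 * c1 + s1 * s1 = 1"
    using fps_sin_cos_sum_of_squares[of "1::real"] by (simp add: s1_def c1_def power2_eq_square)
  have T: "TT = i + s1 * i" by (simp add: TT_def fps_tan_def i_def c1_def s1_def fps_divide_unit)
  have di: "fps_deriv i = s1 * i * i"
    unfolding i_def using fps_inverse_deriv[OF c10]
    by (simp add: c1_def s1_def fps_cos_deriv power2_eq_square flip: fps_const_neg)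
  have ds: "fps_deriv s1 = c1" by (simp add: s1_def c1_def fps_sin_deriv)
  have "2 * fps_deriv TT = 2 * (s1 * i * i + (c1 * i + s1 * (s1 * i * i)))"
    unfolding T by (simp add: di ds algebra_simps)
  also have "\<dots> = 1 + TT * TT" unfolding T by (rule algT[OF ci cs1])
  finally show ?thesis .
qed

lemma TT0: "TT $ 0 = 1"
  by (simp add: TT_def fps_tan_def fps_divide_unit)

definition om :: complex where "om = Complex (-1/2) (sqrt 3 / 2)"
definition "PT = Abs_fps (\<lambda>n. Re (om ^ n) * TT $ n)"
definition "QT = Abs_fps (\<lambda>n. Im (om ^ n) * TT $ n)"

lemma om_pow_split: "i \<le> n \<Longrightarrow> om ^ i * om ^ (n - i) = om ^ n"
  by (simp flip: power_add)

lemma PP_QQ: "(PT * PT - QT * QT) $ n = Re (om ^ n) * (TT * TT) $ n"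
proof -
  have "(PT * PT - QT * QT) $ n = (\<Sum>i=0..n. (Re (om^i) * Re (om^(n-i)) - Im (om^i) * Im (om^(n-i))) * (TT$i * TT$(n-i)))"
    by (simp add: fps_mult_nth PT_def QT_def algebra_simps sum_subtractf)
  also have "\<dots> = (\<Sum>i=0..n. Re (om^n) * (TT$i * TT$(n-i)))"
  proof (rule sum.cong)
    fix i assume "i \<in> {0..n}"
    then have "Re (om^i * om^(n-i)) = Re (om^n)" using om_pow_split by simp
    then show "(Re (om^i) * Re (om^(n-i)) - Im (om^i) * Im (om^(n-i))) * (TT$i * TT$(n-i)) = Re (om^n) * (TT$i * TT$(n-i))"
      by simp
  qed simp
  also have "\<dots> = Re (om ^ n) * (TT * TT) $ n" by (simp add: fps_mult_nth sum_distrib_left)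
  finally show ?thesis .
qed

lemma PQ2: "2 * (PT * QT) $ n = Im (om ^ n) * (TT * TT) $ n"
proof -
  have two: "2 * (PT * QT) $ n = (PT * QT) $ n + (QT * PT) $ n" by (simp add: mult.commute)
  have e1: "(PT * QT) $ n = (\<Sum>i=0..n. Re (om^i) * Im (om^(n-i)) * (TT$i * TT$(n-i)))"
    unfolding fps_mult_nth PT_def QT_def by (simp add: mult_ac)
  have e2: "(QT * PT) $ n = (\<Sum>i=0..n. Im (om^i) * Re (om^(n-i)) * (TT$i * TT$(n-i)))"
    unfolding fps_mult_nth PT_def QT_def by (simp add: mult_ac)
  have "(PT * QT) $ n + (QT * PT) $ n = (\<Sum>i=0..n. (Re (om^i) * Im (om^(n-i)) + Im (om^i) * Re (om^(n-i))) * (TT$i * TT$(n-i)))"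
    unfolding e1 e2 by (simp add: distrib_right sum.distrib)
  also have "\<dots> = (\<Sum>i=0..n. Im (om^n) * (TT$i * TT$(n-i)))"
  proof (rule sum.cong)
    fix i assume "i \<in> {0..n}"
    then have "Im (om^i * om^(n-i)) = Im (om^n)" using om_pow_split by simp
    then show "(Re (om^i) * Im (om^(n-i)) + Im (om^i) * Re (om^(n-i))) * (TT$i * TT$(n-i)) = Im (om^n) * (TT$i * TT$(n-i))"
      by (simp add: algebra_simps)
  qed simp
  also have "\<dots> = Im (om ^ n) * (TT * TT) $ n" by (simp add: fps_mult_nth sum_distrib_left)
  finally show ?thesis using two by simp
qed

lemma om_Suc: "Re (om ^ Suc n) = - Re (om^n) / 2 - sqrt 3 / 2 * Im (om^n)"
   "Im (om ^ Suc n) = - Im (om^n) / 2 + sqrt 3 / 2 * Re (om^n)"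
  by (simp_all add: om_def algebra_simps)

lemma TT_Suc: "2 * (of_nat (Suc n) * TT $ Suc n) = (1 + TT * TT) $ n"
proof -
  have "(2 * fps_deriv TT) $ n = (1 + TT * TT) $ n" using TT_ode by simp
  moreover have "(2 * fps_deriv TT) $ n = 2 * (of_nat (Suc n) * TT $ Suc n)"
    by (simp only: numeral_fps_const fps_mult_left_const_nth fps_deriv_nth) simp
  ultimately show ?thesis by simp
qed

lemma PT_ode: "2 * fps_deriv PT = - (hh * (1 + PT * PT - QT * QT)) - rr * (PT * QT)"
proof (rule fps_ext)
  fix n
  have a0: "(1 + PT * PT - QT * QT) $ n = (1::real fps) $ n + (PT * PT - QT * QT) $ n"
    by (simp only: add_diff_eq[symmetric] fps_add_nth)
  have a: "(1 + PT * PT - QT * QT) $ n = Re (om ^ n) * (1 + TT * TT) $ n"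
  proof -
    have "(1 + PT * PT - QT * QT) $ n = (1::real fps) $ n + Re (om ^ n) * (TT * TT) $ n"
      by (simp only: a0 PP_QQ)
    then show ?thesis by (cases "n = 0") (simp_all add: algebra_simps)
  qed
  have b: "(PT * QT) $ n = Im (om ^ n) * (1 + TT * TT) $ n / 2"
    using PQ2[of n] by (cases "n = 0") (simp_all add: algebra_simps)
  have "(2 * fps_deriv PT) $ n = Re (om ^ Suc n) * (2 * (of_nat (Suc n) * TT $ Suc n))"
    by (simp add: PT_def algebra_simps)
  also have "\<dots> = Re (om ^ Suc n) * (1 + TT * TT) $ n" by (simp only: TT_Suc)
  also have "\<dots> = (- (hh * (1 + PT * PT - QT * QT)) - rr * (PT * QT)) $ n"
  proof -
    define X where "X = 1 + PT * PT - QT * QT"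
    define Y where "Y = PT * QT"
    have aX: "X $ n = Re (om ^ n) * (1 + TT * TT) $ n" using a by (simp add: X_def)
    have bY: "Y $ n = Im (om ^ n) * (1 + TT * TT) $ n / 2" using b by (simp add: Y_def)
    have "(- (hh * X) - rr * Y) $ n = - (1/2 * X $ n) - sqrt 3 * Y $ n"
      by (simp add: hh_def rr_def)
    also have "\<dots> = Re (om ^ Suc n) * (1 + TT * TT) $ n"
      unfolding aX bY om_Suc by (simp add: algebra_simps)
    finally show ?thesis by (simp add: X_def Y_def)
  qed
  finally show "(2 * fps_deriv PT) $ n = (- (hh * (1 + PT * PT - QT * QT)) - rr * (PT * QT)) $ n" .
qed

lemma QT_ode: "2 * fps_deriv QT = rr * hh * (1 + PT * PT - QT * QT) - PT * QT"
proof (rule fps_ext)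
  fix n
  have a0: "(1 + PT * PT - QT * QT) $ n = (1::real fps) $ n + (PT * PT - QT * QT) $ n"
    by (simp only: add_diff_eq[symmetric] fps_add_nth)
  have a: "(1 + PT * PT - QT * QT) $ n = Re (om ^ n) * (1 + TT * TT) $ n"
  proof -
    have "(1 + PT * PT - QT * QT) $ n = (1::real fps) $ n + Re (om ^ n) * (TT * TT) $ n"
      by (simp only: a0 PP_QQ)
    then show ?thesis by (cases "n = 0") (simp_all add: algebra_simps)
  qed
  have b: "(PT * QT) $ n = Im (om ^ n) * (1 + TT * TT) $ n / 2"
    using PQ2[of n] by (cases "n = 0") (simp_all add: algebra_simps)
  have "(2 * fps_deriv QT) $ n = Im (om ^ Suc n) * (2 * (of_nat (Suc n) * TT $ Suc n))"
    by (simp add: QT_def algebra_simps)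
  also have "\<dots> = Im (om ^ Suc n) * (1 + TT * TT) $ n" by (simp only: TT_Suc)
  also have "\<dots> = (rr * hh * (1 + PT * PT - QT * QT) - PT * QT) $ n"
  proof -
    define X where "X = 1 + PT * PT - QT * QT"
    define Y where "Y = PT * QT"
    have aX: "X $ n = Re (om ^ n) * (1 + TT * TT) $ n" using a by (simp add: X_def)
    have bY: "Y $ n = Im (om ^ n) * (1 + TT * TT) $ n / 2" using b by (simp add: Y_def)
    have "(rr * hh * X - Y) $ n = sqrt 3 * (1/2 * X $ n) - Y $ n"
      by (simp add: hh_def rr_def)
    also have "\<dots> = Im (om ^ Suc n) * (1 + TT * TT) $ n"
      unfolding aX bY om_Suc by (simp add: algebra_simps)
    finally show ?thesis by (simp add: X_def Y_def)
  qed
  finally show "(2 * fps_deriv QT) $ n = (rr * hh * (1 + PT * PT - QT * QT) - PT * QT) $ n" .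
qed



definition "SS = chy + sn"
definition "Pc = cs * inverse SS"
definition "Qc = shy * inverse SS"

lemma SS0: "SS $ 0 = 1" by (simp add: SS_def chy_def fps_div2 sn_def)
lemma Pc_eq: "Pc * SS = cs" unfolding Pc_def using SS0 by (simp add: inverse_mult_eq_1 mult.assoc)
lemma Qc_eq: "Qc * SS = shy" unfolding Qc_def using SS0 by (simp add: inverse_mult_eq_1 mult.assoc)
lemma d_SS: "fps_deriv SS = rr * hh * shy + hh * cs" by (simp add: SS_def d_chy d_sn)

lemma Pc_Qc_ode:
  "2 * fps_deriv Pc = - (hh * (1 + Pc * Pc - Qc * Qc)) - rr * (Pc * Qc)"
  "2 * fps_deriv Qc = rr * hh * (1 + Pc * Pc - Qc * Qc) - Pc * Qc"
proof -
  have h3: "fps_deriv Pc * SS + Pc * fps_deriv SS = - (hh * sn)"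
    using arg_cong[OF Pc_eq, of fps_deriv] by (simp add: d_cs algebra_simps)
  have h4: "fps_deriv Qc * SS + Qc * fps_deriv SS = rr * hh * chy"
    using arg_cong[OF Qc_eq, of fps_deriv] by (simp add: d_shy algebra_simps)
  note A = algD[OF rr2 hh2 chsh1 sc1 SS_def d_SS Pc_eq Qc_eq h3 h4]
  have nz: "SS * SS \<noteq> 0" using SS0 by (auto dest!: arg_cong[where f="\<lambda>x. x $ 0"])
  show "2 * fps_deriv Pc = - (hh * (1 + Pc * Pc - Qc * Qc)) - rr * (Pc * Qc)"
    using A(1) nz by simp
  show "2 * fps_deriv Qc = rr * hh * (1 + Pc * Pc - Qc * Qc) - Pc * Qc"
    using A(2) nz by simp
qed

lemma D_unique:
  assumes p1: "2 * fps_deriv P1 = - (hh * (1 + P1 * P1 - Q1 * Q1)) - rr * (P1 * Q1)"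
  and q1: "2 * fps_deriv Q1 = rr * hh * (1 + P1 * P1 - Q1 * Q1) - P1 * Q1"
  and p2: "2 * fps_deriv P2 = - (hh * (1 + P2 * P2 - Q2 * Q2)) - rr * (P2 * Q2)"
  and q2: "2 * fps_deriv Q2 = rr * hh * (1 + P2 * P2 - Q2 * Q2) - P2 * Q2"
  and i: "P1 $ 0 = P2 $ 0" "Q1 $ 0 = Q2 $ 0"
  shows "P1 = P2 \<and> Q1 = Q2"
proof -
  have "\<forall>k\<le>n. P1 $ k = P2 $ k \<and> Q1 $ k = Q2 $ k" for n
  proof (induction n)
    case 0 then show ?case using i by simp
  next
    case (Suc n)
    have PP: "\<forall>k\<le>n. P1 $ k = P2 $ k" and QQ: "\<forall>k\<le>n. Q1 $ k = Q2 $ k" using Suc by simp_all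
    have m1: "(P1 * P1) $ n = (P2 * P2) $ n" by (rule mult_nth_cong[OF PP PP])
    have m2: "(Q1 * Q1) $ n = (Q2 * Q2) $ n" by (rule mult_nth_cong[OF QQ QQ])
    have m3: "(P1 * Q1) $ n = (P2 * Q2) $ n" by (rule mult_nth_cong[OF PP QQ])
    have "(2 * fps_deriv P1) $ n = (2 * fps_deriv P2) $ n"
      unfolding p1 p2 by (simp add: hh_def rr_def m1 m2 m3)
    then have sa: "P1 $ Suc n = P2 $ Suc n"
      by (simp add: numeral_fps_const del: of_nat_Suc)
    have "(2 * fps_deriv Q1) $ n = (2 * fps_deriv Q2) $ n"
      unfolding q1 q2 by (simp add: hh_def rr_def m1 m2 m3)
    then have sb: "Q1 $ Suc n = Q2 $ Suc n"
      by (simp add: numeral_fps_const del: of_nat_Suc)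
    show ?case using Suc sa sb by (auto simp: le_Suc_eq)
  qed
  then show ?thesis by (auto intro!: fps_ext)
qed

lemma PT_Pc: "PT = Pc" and QT_Qc: "QT = Qc"
proof -
  have "PT = Pc \<and> QT = Qc"
  proof (rule D_unique[OF PT_ode QT_ode Pc_Qc_ode])
    show "PT $ 0 = Pc $ 0" by (simp add: PT_def TT0 Pc_def SS0 cs_def)
    show "QT $ 0 = Qc $ 0" by (simp add: QT_def Qc_def shy_def fps_div2)
  qed
  then show "PT = Pc" "QT = Qc" by simp_all
qed

lemma om3: "om ^ 3 = 1"
proof -
  have "om * om = Complex (-1/2) (- (sqrt 3 / 2))" by (simp add: om_def field_simps complex_eq_iff)
  then have "om ^ 3 = Complex (-1/2) (- (sqrt 3 / 2)) * om" by (simp add: power3_eq_cube)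
  also have "\<dots> = 1" by (simp add: om_def field_simps complex_eq_iff)
  finally show ?thesis .
qed

lemma om_pow_mod: "om ^ k = om ^ (k mod 3)"
proof -
  have "om ^ k = om ^ (k mod 3) * (om ^ 3) ^ (k div 3)"
    by (metis power_add power_mult mod_mult_div_eq)
  then show ?thesis by (simp add: om3)
qed

lemma U_eq:
  "Abs_fps (\<lambda>k. if k mod 3 = 0 then euler_number k / fact k
                 else if k mod 3 = 1 then - (euler_number k / fact k) else 0)
   = PT - fps_const (1 / sqrt 3) * QT"
proof (rule fps_ext)
  fix k
  have E: "euler_number k / fact k = TT $ k" by (simp add: euler_number_def TT_def)
  have "k mod 3 = 0 \<or> k mod 3 = 1 \<or> k mod 3 = 2" by auto
  moreover have "om ^ 1 = om" by simp
  moreover have "om ^ 2 = Complex (-1/2) (- (sqrt 3 / 2))" by (simp add: om_def power2_eq_square field_simps complex_eq_iff)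
  ultimately show "Abs_fps (\<lambda>k. if k mod 3 = 0 then euler_number k / fact k
                 else if k mod 3 = 1 then - (euler_number k / fact k) else 0) $ k
     = (PT - fps_const (1 / sqrt 3) * QT) $ k"
    using om_pow_mod[of k]
    by (auto simp: E PT_def QT_def om_def field_simps)
qed

theorem analytic_main:
  fixes f e :: "nat \<Rightarrow> nat"
  assumes R1: "\<And>n. f (Suc n) = (\<Sum>j=0..n. if even j then (n choose j) * f j * f (n-j) else 0) + (if odd n then e n else 0)"
  and R2: "\<And>n. e (Suc n) = (\<Sum>j=0..n. if even j then (n choose j) * f j * e (n-j) else 0) + (if even n then f n else 0)"
  and f0: "f 0 = 1" and e0: "e 0 = 0"
  shows "Abs_fps (\<lambda>n. real (f n) / fact n) =
           inverse (Abs_fps (\<lambda>k. if k mod 3 = 0 then euler_number k / fact k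
                                 else if k mod 3 = 1 then - (euler_number k / fact k)
                                 else 0))
       \<and> Abs_fps (\<lambda>n. real (f n) / fact n) =
           (3 * fps_sin (1/2) + 3 * ((fps_exp (sqrt 3 / 2) + fps_exp (- (sqrt 3 / 2))) / 2)) /
           (3 * fps_cos (1/2) - fps_const (sqrt 3) * ((fps_exp (sqrt 3 / 2) - fps_exp (- (sqrt 3 / 2))) / 2))"
proof -
  note O = rec_to_ode[OF R1 R2]
  have AF: "Abs_fps (\<lambda>n. real (f n) / fact n) = Astar"
    by (rule sys_unique[OF O(1) O(2) Astar_ode Gstar_ode])
       (simp_all add: f0 e0 Astar_def Gstar_def fps_divide_unit NN0 WW0 shy_def fps_div2)
  have NW: "NN / WW = (3 * fps_sin (1/2) + 3 * ((fps_exp (sqrt 3 / 2) + fps_exp (- (sqrt 3 / 2))) / 2)) /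
           (3 * fps_cos (1/2) - fps_const (sqrt 3) * ((fps_exp (sqrt 3 / 2) - fps_exp (- (sqrt 3 / 2))) / 2))"
    by (simp add: NN_def WW_def chy_def shy_def)
  have U: "PT - fps_const (1 / sqrt 3) * QT = WW * inverse NN"
  proof -
    have NS: "NN = 3 * SS" by (simp add: NN_alt SS_def algebra_simps)
    have "(PT - fps_const (1 / sqrt 3) * QT) * NN = 3 * (Pc * SS) - fps_const (3 / sqrt 3) * (Qc * SS)"
      unfolding PT_Pc QT_Qc NS by (simp add: algebra_simps numeral_fps_const)
    also have "\<dots> = WW" unfolding Pc_eq Qc_eq WW_alt
      by (simp add: rr_def cs_def real_div_sqrt)
    finally have "(PT - fps_const (1 / sqrt 3) * QT) * NN = WW" .
    then have "(PT - fps_const (1 / sqrt 3) * QT) * NN * inverse NN = WW * inverse NN" by simp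
    moreover have "NN * inverse NN = 1" using NN0 by (simp add: inverse_mult_eq_1')
    ultimately show ?thesis by (metis mult.assoc mult_1_right)
  qed
  have "inverse (WW * inverse NN) = NN / WW"
    using NN0 WW0 by (simp add: fps_inverse_mult fps_divide_unit mult.commute)
  then show ?thesis unfolding U_eq U AF Astar_def NW[symmetric] by simp
qed



definition goodp :: "nat \<Rightarrow> nat list \<Rightarrow> bool" where
  "goodp p xs \<longleftrightarrow> (\<forall>i. is_valley xs i \<longrightarrow> even (i + p)) \<and> (\<forall>i. is_peak xs i \<longrightarrow> odd (i + p))"
definition ends_desc :: "nat list \<Rightarrow> bool" where
  "ends_desc xs \<longleftrightarrow> 2 \<le> length xs \<and> xs ! (length xs - 2) > xs ! (length xs - 1)"
definition ends_asc :: "nat list \<Rightarrow> bool" where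
  "ends_asc xs \<longleftrightarrow> 2 \<le> length xs \<and> xs ! (length xs - 2) < xs ! (length xs - 1)"
definition starts_asc :: "nat list \<Rightarrow> bool" where
  "starts_asc xs \<longleftrightarrow> 2 \<le> length xs \<and> xs ! 0 < xs ! 1"

lemma nth_split: "(\<alpha> @ M # \<beta>) ! t = (if t < length \<alpha> then \<alpha> ! t else if t = length \<alpha> then M else \<beta> ! (t - length \<alpha> - 1))"
  by (auto simp: nth_append nth_Cons' diff_diff_add)

lemma peak_split:
  assumes "\<forall>x\<in>set \<alpha>. x < M" "\<forall>x\<in>set \<beta>. x < M"
  shows "is_peak (\<alpha> @ M # \<beta>) k \<longleftrightarrow>
     (k + 1 \<le> length \<alpha> \<and> is_peak \<alpha> k) \<or> (k = length \<alpha> + 1 \<and> length \<alpha> \<ge> 1 \<and> \<beta> \<noteq> [])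
     \<or> (k \<ge> length \<alpha> + 3 \<and> is_peak \<beta> (k - length \<alpha> - 1))"
proof -
  let ?j = "length \<alpha>"
  have A: "\<alpha> ! t < M" if "t < ?j" for t using assms(1) that by auto
  have B: "\<beta> ! t < M" if "t < length \<beta>" for t using assms(2) that by auto
  have B2: "\<beta> ! 0 < M" if "2 \<le> length \<beta>" using that B[of 0] by (cases \<beta>) auto
  consider "k + 1 \<le> ?j" | "k = ?j" | "k = ?j + 1" | "k = ?j + 2" | "k \<ge> ?j + 3" by linarith
  then show ?thesis
  proof cases
    case 1 then show ?thesis by (auto simp: is_peak_def nth_split)
  next
    case 2 then show ?thesis using A[of "?j - 1"] by (auto simp: is_peak_def nth_split)
  next
    case 3 then show ?thesis using A[of "?j - 1"] B[of 0] by (auto simp: is_peak_def nth_split Suc_le_eq)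
  next
    case 4 then show ?thesis using B2 by (auto simp: is_peak_def nth_split)
  next
    case 5
    define t where "t = k - ?j - 1"
    have kt: "k = ?j + 1 + t" and t2: "t \<ge> 2" using 5 by (auto simp: t_def)
    have i1: "?j + 1 + t - 2 = ?j + 1 + (t - 2)" "?j + 1 + t - 1 = ?j + 1 + (t - 1)" using t2 by auto
    have N: "(\<alpha> @ M # \<beta>) ! (?j + 1 + u) = \<beta> ! u" for u by (simp add: nth_append)
    show ?thesis unfolding kt is_peak_def i1 N using t2 by auto
  qed
qed

lemma valley_split:
  assumes "\<forall>x\<in>set \<alpha>. x < M" "\<forall>x\<in>set \<beta>. x < M"
  shows "is_valley (\<alpha> @ M # \<beta>) k \<longleftrightarrow>
     (k + 1 \<le> length \<alpha> \<and> is_valley \<alpha> k) \<or> (k = length \<alpha> \<and> ends_desc \<alpha>)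
     \<or> (k = length \<alpha> + 2 \<and> starts_asc \<beta>)
     \<or> (k \<ge> length \<alpha> + 3 \<and> is_valley \<beta> (k - length \<alpha> - 1))"
proof -
  let ?j = "length \<alpha>"
  have A: "\<alpha> ! t < M" if "t < ?j" for t using assms(1) that by auto
  have B: "\<beta> ! t < M" if "t < length \<beta>" for t using assms(2) that by auto
  have B2: "\<beta> ! 0 < M" if "2 \<le> length \<beta>" using that B[of 0] by (cases \<beta>) auto
  consider "k + 1 \<le> ?j" | "k = ?j" | "k = ?j + 1" | "k = ?j + 2" | "k \<ge> ?j + 3" by linarith
  then show ?thesis
  proof cases
    case 1 then show ?thesis by (auto simp: is_valley_def nth_split ends_desc_def)
  next
    case 2 then show ?thesis using A[of "?j - 1"] by (auto simp: is_valley_def nth_split ends_desc_def)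
  next
    case 3 then show ?thesis using A[of "?j - 1"] B[of 0] by (auto simp: is_valley_def nth_split)
  next
    case 4
    with B2 show ?thesis by (auto simp: is_valley_def nth_split starts_asc_def)
  next
    case 5
    define t where "t = k - ?j - 1"
    have kt: "k = ?j + 1 + t" and t2: "t \<ge> 2" using 5 by (auto simp: t_def)
    have i1: "?j + 1 + t - 2 = ?j + 1 + (t - 2)" "?j + 1 + t - 1 = ?j + 1 + (t - 1)" using t2 by auto
    have N: "(\<alpha> @ M # \<beta>) ! (?j + 1 + u) = \<beta> ! u" for u by (simp add: nth_append)
    show ?thesis unfolding kt is_valley_def i1 N using t2 by auto
  qed
qed


lemma peak_bounds: "is_peak xs k \<Longrightarrow> 2 \<le> k \<and> k + 1 \<le> length xs" by (simp add: is_peak_def)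
lemma valley_bounds: "is_valley xs k \<Longrightarrow> 2 \<le> k \<and> k + 1 \<le> length xs" by (simp add: is_valley_def)

lemma goodp_split:
  assumes a: "\<forall>x\<in>set \<alpha>. x < M" "\<forall>x\<in>set \<beta>. x < M"
  shows "goodp p (\<alpha> @ M # \<beta>) \<longleftrightarrow> goodp p \<alpha> \<and> goodp (p + length \<alpha> + 1) \<beta>
     \<and> (length \<alpha> \<ge> 1 \<and> \<beta> \<noteq> [] \<longrightarrow> odd (length \<alpha> + 1 + p))
     \<and> (ends_desc \<alpha> \<longrightarrow> even (length \<alpha> + p)) \<and> (starts_asc \<beta> \<longrightarrow> even (length \<alpha> + 2 + p))"
  (is "?L \<longleftrightarrow> ?R")
proof
  let ?j = "length \<alpha>"
  assume L: ?L
  have V: "is_valley (\<alpha> @ M # \<beta>) k \<Longrightarrow> even (k + p)" for k using L by (simp add: goodp_def)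
  have P: "is_peak (\<alpha> @ M # \<beta>) k \<Longrightarrow> odd (k + p)" for k using L by (simp add: goodp_def)
  have "goodp p \<alpha>"
    unfolding goodp_def using V P valley_bounds peak_bounds
    by (auto simp: valley_split[OF a] peak_split[OF a])
  moreover have "goodp (p + ?j + 1) \<beta>"
  proof -
    have "even (k + (p + ?j + 1))" if "is_valley \<beta> k" for k
      using V[of "k + ?j + 1"] that valley_bounds[OF that] by (simp add: valley_split[OF a] algebra_simps)
    moreover have "odd (k + (p + ?j + 1))" if "is_peak \<beta> k" for k
      using P[of "k + ?j + 1"] that peak_bounds[OF that] by (simp add: peak_split[OF a] algebra_simps)
    ultimately show ?thesis by (simp add: goodp_def)
  qed
  moreover have "odd (?j + 1 + p)" if "?j \<ge> 1" "\<beta> \<noteq> []"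
    using P[of "?j + 1"] that by (simp add: peak_split[OF a])
  moreover have "even (?j + p)" if "ends_desc \<alpha>"
    using V[of "?j"] that by (simp add: valley_split[OF a])
  moreover have "even (?j + 2 + p)" if "starts_asc \<beta>"
    using V[of "?j + 2"] that by (simp add: valley_split[OF a])
  ultimately show ?R by blast
next
  let ?j = "length \<alpha>"
  assume R: ?R
  have "even (k + p)" if "is_valley (\<alpha> @ M # \<beta>) k" for k
  proof -
    from that consider "k + 1 \<le> ?j \<and> is_valley \<alpha> k" | "k = ?j \<and> ends_desc \<alpha>" | "k = ?j + 2 \<and> starts_asc \<beta>"
      | "k \<ge> ?j + 3 \<and> is_valley \<beta> (k - ?j - 1)" by (auto simp: valley_split[OF a])
    then show ?thesis
    proof cases
      case 4
      have gb: "\<forall>i. is_valley \<beta> i \<longrightarrow> even (i + (p + ?j + 1))" using R unfolding goodp_def by blast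
      then have "even (k - ?j - 1 + (p + ?j + 1))" using 4 by blast
      moreover have "k - ?j - 1 + (p + ?j + 1) = k + p" using 4 by simp
      ultimately show ?thesis by simp
    qed (use R in \<open>auto simp: goodp_def algebra_simps\<close>)
  qed
  moreover have "odd (k + p)" if "is_peak (\<alpha> @ M # \<beta>) k" for k
  proof -
    from that consider "k + 1 \<le> ?j \<and> is_peak \<alpha> k" | "k = ?j + 1 \<and> ?j \<ge> 1 \<and> \<beta> \<noteq> []"
      | "k \<ge> ?j + 3 \<and> is_peak \<beta> (k - ?j - 1)" by (auto simp: peak_split[OF a])
    then show ?thesis
    proof cases
      case 3
      have gb: "\<forall>i. is_peak \<beta> i \<longrightarrow> odd (i + (p + ?j + 1))" using R unfolding goodp_def by blast
      then have "odd (k - ?j - 1 + (p + ?j + 1))" using 3 by blast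
      moreover have "k - ?j - 1 + (p + ?j + 1) = k + p" using 3 by simp
      ultimately show ?thesis by simp
    qed (use R in \<open>auto simp: goodp_def algebra_simps\<close>)
  qed
  ultimately show ?L by (simp add: goodp_def)
qed


lemma ends_desc_split:
  assumes a: "\<forall>x\<in>set \<alpha>. x < M" "\<forall>x\<in>set \<beta>. x < M"
  shows "ends_desc (\<alpha> @ M # \<beta>) \<longleftrightarrow> (length \<beta> = 1 \<or> ends_desc \<beta>)"
proof (cases "length \<beta> \<ge> 2")
  case True
  have N: "(\<alpha> @ M # \<beta>) ! (length \<alpha> + 1 + u) = \<beta> ! u" for u by (simp add: nth_append)
  have i: "length (\<alpha> @ M # \<beta>) - 2 = length \<alpha> + 1 + (length \<beta> - 2)"
          "length (\<alpha> @ M # \<beta>) - 1 = length \<alpha> + 1 + (length \<beta> - 1)" using True by auto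
  show ?thesis unfolding ends_desc_def i N using True by auto
next
  case False
  then consider "\<beta> = []" | b where "\<beta> = [b]" by (cases \<beta> rule: remdups_adj.cases) auto
  then show ?thesis
  proof cases
    case 1
    then show ?thesis using a(1)
      by (cases \<alpha> rule: rev_cases) (auto simp: ends_desc_def nth_append)
  next
    case 2
    then show ?thesis using a(2) by (auto simp: ends_desc_def nth_append)
  qed
qed

lemma goodp_even: "even p \<Longrightarrow> goodp p xs = goodp 0 xs" by (simp add: goodp_def)
lemma goodp_odd: "odd p \<Longrightarrow> goodp p xs = goodp 1 xs" by (simp add: goodp_def)

definition monoon :: "(nat \<Rightarrow> nat) \<Rightarrow> nat set \<Rightarrow> bool" where
  "monoon h A \<longleftrightarrow> (\<forall>x\<in>A. \<forall>y\<in>A. x < y \<longrightarrow> h x < h y)"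
definition antion :: "(nat \<Rightarrow> nat) \<Rightarrow> nat set \<Rightarrow> bool" where
  "antion h A \<longleftrightarrow> (\<forall>x\<in>A. \<forall>y\<in>A. x < y \<longrightarrow> h y < h x)"

lemma mono_less_iff: "monoon h A \<Longrightarrow> a \<in> A \<Longrightarrow> b \<in> A \<Longrightarrow> h a < h b \<longleftrightarrow> a < b"
  unfolding monoon_def by (metis less_asym linorder_neqE_nat)
lemma anti_less_iff: "antion h A \<Longrightarrow> a \<in> A \<Longrightarrow> b \<in> A \<Longrightarrow> h a < h b \<longleftrightarrow> b < a"
  unfolding antion_def by (metis less_asym linorder_neqE_nat)

lemma peak_map: "monoon h (set xs) \<Longrightarrow> is_peak (map h xs) i \<longleftrightarrow> is_peak xs i"
  unfolding is_peak_def by (auto simp: mono_less_iff)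
lemma valley_map: "monoon h (set xs) \<Longrightarrow> is_valley (map h xs) i \<longleftrightarrow> is_valley xs i"
  unfolding is_valley_def by (auto simp: mono_less_iff)
lemma ends_desc_map: "monoon h (set xs) \<Longrightarrow> ends_desc (map h xs) \<longleftrightarrow> ends_desc xs"
  unfolding ends_desc_def by (auto simp: mono_less_iff)
lemma ends_asc_map: "monoon h (set xs) \<Longrightarrow> ends_asc (map h xs) \<longleftrightarrow> ends_asc xs"
  unfolding ends_asc_def by (auto simp: mono_less_iff)
lemma goodp_map: "monoon h (set xs) \<Longrightarrow> goodp p (map h xs) \<longleftrightarrow> goodp p xs"
  unfolding goodp_def by (simp add: peak_map valley_map)

lemma peak_map_anti: "antion h (set xs) \<Longrightarrow> is_peak (map h xs) i \<longleftrightarrow> is_valley xs i"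
  unfolding is_peak_def is_valley_def by (auto simp: anti_less_iff)
lemma valley_map_anti: "antion h (set xs) \<Longrightarrow> is_valley (map h xs) i \<longleftrightarrow> is_peak xs i"
  unfolding is_peak_def is_valley_def by (auto simp: anti_less_iff)
lemma ends_desc_map_anti: "antion h (set xs) \<Longrightarrow> ends_desc (map h xs) \<longleftrightarrow> ends_asc xs"
  unfolding ends_desc_def ends_asc_def by (auto simp: anti_less_iff)
lemma goodp_map_anti: "antion h (set xs) \<Longrightarrow> goodp p (map h xs) \<longleftrightarrow> goodp (Suc p) xs"
  unfolding goodp_def by (auto simp: peak_map_anti valley_map_anti)

definition relinv :: "(nat list \<Rightarrow> bool) \<Rightarrow> bool" where
  "relinv P \<longleftrightarrow> (\<forall>xs h. monoon h (set xs) \<longrightarrow> P (map h xs) = P xs)"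

definition cnt :: "(nat list \<Rightarrow> bool) \<Rightarrow> nat \<Rightarrow> nat" where
  "cnt P m = card {xs \<in> perms_of m. P xs}"
definition cntS :: "(nat list \<Rightarrow> bool) \<Rightarrow> nat set \<Rightarrow> nat" where
  "cntS P S = card {xs. distinct xs \<and> set xs = S \<and> P xs}"

lemma cnt_relabel:
  assumes S: "finite S" and P: "relinv P"
  shows "cntS P S = cnt P (card S)"
proof -
  define h where "h x = Suc (card {y\<in>S. y < x})" for x
  have mono: "monoon h S"
    unfolding monoon_def
  proof (intro ballI impI)
    fix x y assume xy: "x \<in> S" "y \<in> S" "x < y"
    have "{z\<in>S. z < x} \<subset> {z\<in>S. z < y}" using xy by auto
    then have "card {z\<in>S. z < x} < card {z\<in>S. z < y}" using S by (intro psubset_card_mono) auto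
    then show "h x < h y" by (simp add: h_def)
  qed
  have inj: "inj_on h S"
    by (metis inj_onI linorder_neqE_nat mono monoon_def order_less_irrefl)
  have sub: "h ` S \<subseteq> {1..card S}"
  proof
    fix z assume "z \<in> h ` S"
    then obtain x where x: "x \<in> S" "z = h x" by auto
    have "{y\<in>S. y < x} \<subset> S" using x by auto
    then have "card {y\<in>S. y < x} < card S" using S by (intro psubset_card_mono) auto
    then show "z \<in> {1..card S}" using x by (simp add: h_def)
  qed
  have img: "h ` S = {1..card S}"
    using sub by (intro card_subset_eq) (auto simp: card_image[OF inj])
  let ?A = "{xs. distinct xs \<and> set xs = S \<and> P xs}"
  let ?B = "{xs \<in> perms_of (card S). P xs}"
  have injm: "inj_on (map h) ?A"
  proof (rule inj_onI)
    fix xs ys assume "xs \<in> ?A" "ys \<in> ?A" "map h xs = map h ys"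
    then show "xs = ys" using inj by (auto intro: map_inj_on)
  qed
  have "map h ` ?A = ?B"
  proof
    show "map h ` ?A \<subseteq> ?B"
    proof
      fix ys assume "ys \<in> map h ` ?A"
      then obtain xs where xs: "xs \<in> ?A" "ys = map h xs" by auto
      have "monoon h (set xs)" using xs mono by simp
      then have "P ys" using xs P by (simp add: relinv_def)
      moreover have "distinct ys" using xs inj by (simp add: distinct_map)
      moreover have "set ys = {1..card S}" using xs img by simp
      ultimately show "ys \<in> ?B" by (simp add: perms_of_def)
    qed
  next
    show "?B \<subseteq> map h ` ?A"
    proof
      fix ys assume ys: "ys \<in> ?B"
      define g where "g = the_inv_into S h"
      define xs where "xs = map g ys"
      have sy: "set ys = h ` S" using ys img by (simp add: perms_of_def)
      have hx: "map h xs = ys" unfolding xs_def g_def map_map using sy inj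
        by (intro map_idI) (auto simp: f_the_inv_into_f)
      have "set xs = S" unfolding xs_def g_def using sy inj by (simp add: the_inv_into_onto)
      moreover have "distinct xs"
      proof -
        have "inj_on g (set ys)" unfolding g_def sy by (rule inj_on_the_inv_into[OF inj])
        then show ?thesis using ys unfolding xs_def by (simp add: distinct_map perms_of_def)
      qed
      moreover have "P xs"
      proof -
        have "monoon h (set xs)" using \<open>set xs = S\<close> mono by simp
        then have "P (map h xs) = P xs" using P by (simp add: relinv_def)
        then show ?thesis using hx ys by simp
      qed
      ultimately show "ys \<in> map h ` ?A" using hx by force
    qed
  qed
  then show ?thesis unfolding cntS_def cnt_def using card_image[OF injm] by simp
qed

lemma cnt_compl: "cnt P m = cnt (\<lambda>xs. P (map (\<lambda>x. Suc m - x) xs)) m"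
proof -
  let ?c = "map (\<lambda>x. Suc m - x)"
  let ?A = "{xs \<in> perms_of m. P (?c xs)}"
  let ?B = "{xs \<in> perms_of m. P xs}"
  have cc: "?c (?c xs) = xs" if "xs \<in> perms_of m" for xs
  proof -
    have "\<forall>x\<in>set xs. Suc m - (Suc m - x) = x" using that by (auto simp: perms_of_def)
    then show ?thesis by (induction xs) auto
  qed
  have injc: "inj_on (\<lambda>x. Suc m - x) {1..m}" by (auto simp: inj_on_def)
  have imgc: "(\<lambda>x. Suc m - x) ` {1..m} = {1..m}"
  proof
    show "(\<lambda>x. Suc m - x) ` {1..m} \<subseteq> {1..m}" by auto
    show "{1..m} \<subseteq> (\<lambda>x. Suc m - x) ` {1..m}"
    proof
      fix y assume "y \<in> {1..m}"
      then have "y = Suc m - (Suc m - y)" "Suc m - y \<in> {1..m}" by auto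
      then show "y \<in> (\<lambda>x. Suc m - x) ` {1..m}" by blast
    qed
  qed
  have cp: "?c xs \<in> perms_of m" if "xs \<in> perms_of m" for xs
    using that injc imgc by (auto simp: perms_of_def distinct_map intro: inj_on_subset)
  have "inj_on ?c ?A" by (rule inj_onI) (metis (no_types, lifting) cc mem_Collect_eq)
  moreover have "?c ` ?A = ?B"
  proof
    show "?c ` ?A \<subseteq> ?B" using cp by auto
    show "?B \<subseteq> ?c ` ?A"
    proof
      fix xs assume xs: "xs \<in> ?B"
      then have "?c xs \<in> ?A" using cp cc by auto
      moreover have "?c (?c xs) = xs" using xs cc by auto
      ultimately show "xs \<in> ?c ` ?A" by (metis image_eqI)
    qed
  qed
  ultimately show ?thesis unfolding cnt_def by (metis card_image)
qed

lemma antion_compl: "xs \<in> perms_of m \<Longrightarrow> antion (\<lambda>x. Suc m - x) (set xs)"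
  by (auto simp: antion_def perms_of_def)


lemma fin_lists: "finite {xs::nat list. set xs \<subseteq> {1..n} \<and> length xs \<le> n}"
  by (rule finite_lists_length_le) simp

lemma distinct_len_le: "distinct xs \<Longrightarrow> set xs \<subseteq> {1..n} \<Longrightarrow> length xs \<le> n"
  by (metis card_atLeastAtMost card_mono diff_Suc_1 distinct_card finite_atLeastAtMost)

lemma card_X:
  assumes Ia: "relinv Pa" and Ib: "relinv Pb" and j: "j \<le> n"
  shows "card {(\<alpha>, \<beta>). distinct (\<alpha> @ \<beta>) \<and> set (\<alpha> @ \<beta>) = {1..n} \<and> length \<alpha> = j \<and> Pa \<alpha> \<and> Pb \<beta>}
         = (n choose j) * cnt Pa j * cnt Pb (n - j)"
proof -
  let ?X = "{(\<alpha>, \<beta>). distinct (\<alpha> @ \<beta>) \<and> set (\<alpha> @ \<beta>) = {1..n} \<and> length \<alpha> = j \<and> Pa \<alpha> \<and> Pb \<beta>}"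
  let ?Sub = "{S. S \<subseteq> {1..n} \<and> card S = j}"
  define A where "A S = {\<alpha>. distinct \<alpha> \<and> set \<alpha> = S \<and> Pa \<alpha>}" for S
  define B where "B S = {\<beta>. distinct \<beta> \<and> set \<beta> = {1..n} - S \<and> Pb \<beta>}" for S
  have XU: "?X = (\<Union>S\<in>?Sub. A S \<times> B S)"
  proof
    show "?X \<subseteq> (\<Union>S\<in>?Sub. A S \<times> B S)"
    proof
      fix p assume "p \<in> ?X"
      then obtain \<alpha> \<beta> where p: "p = (\<alpha>, \<beta>)" and h: "distinct (\<alpha> @ \<beta>)" "set (\<alpha> @ \<beta>) = {1..n}"
        "length \<alpha> = j" "Pa \<alpha>" "Pb \<beta>" by auto
      have "set \<alpha> \<in> ?Sub" using h by (auto simp: distinct_card)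
      moreover have "\<alpha> \<in> A (set \<alpha>)" using h by (simp add: A_def)
      moreover have "\<beta> \<in> B (set \<alpha>)" using h by (auto simp: B_def)
      ultimately show "p \<in> (\<Union>S\<in>?Sub. A S \<times> B S)" using p by blast
    qed
  next
    show "(\<Union>S\<in>?Sub. A S \<times> B S) \<subseteq> ?X"
    proof
      fix p assume "p \<in> (\<Union>S\<in>?Sub. A S \<times> B S)"
      then obtain S \<alpha> \<beta> where p: "p = (\<alpha>, \<beta>)" and S: "S \<subseteq> {1..n}" "card S = j"
        and a: "\<alpha> \<in> A S" and b: "\<beta> \<in> B S" by blast
      have "distinct (\<alpha> @ \<beta>)" using a b by (auto simp: A_def B_def)
      moreover have "set (\<alpha> @ \<beta>) = {1..n}" using a b S by (auto simp: A_def B_def)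
      moreover have "length \<alpha> = j" using a S by (auto simp: A_def distinct_card[symmetric])
      ultimately show "p \<in> ?X" using p a b by (auto simp: A_def B_def)
    qed
  qed
  have finA: "finite (A S)" if "S \<subseteq> {1..n}" for S
    by (rule finite_subset[OF _ fin_lists[of n]]) (use that distinct_len_le in \<open>auto simp: A_def\<close>)
  have finB: "finite (B S)" for S
    by (rule finite_subset[OF _ fin_lists[of n]]) (use distinct_len_le in \<open>auto simp: B_def\<close>)
  have finSub: "finite ?Sub" by (rule finite_subset[of _ "Pow {1..n}"]) auto
  have "card ?X = (\<Sum>S\<in>?Sub. card (A S \<times> B S))"
    unfolding XU
  proof (rule card_UN_disjoint[OF finSub])
    show "\<forall>S\<in>?Sub. finite (A S \<times> B S)" using finA finB by auto
    show "\<forall>S\<in>?Sub. \<forall>T\<in>?Sub. S \<noteq> T \<longrightarrow> A S \<times> B S \<inter> A T \<times> B T = {}"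
      by (auto simp: A_def)
  qed
  also have "\<dots> = (\<Sum>S\<in>?Sub. cnt Pa j * cnt Pb (n - j))"
  proof (rule sum.cong)
    fix S assume S: "S \<in> ?Sub"
    have "card (A S) = cnt Pa j"
      using cnt_relabel[OF _ Ia, of S] S finite_subset[of S "{1..n}"] by (auto simp: A_def cntS_def)
    moreover have "card (B S) = cnt Pb (n - j)"
    proof -
      have "card ({1..n} - S) = n - j" using S by (auto simp: card_Diff_subset finite_subset)
      then show ?thesis using cnt_relabel[OF _ Ib, of "{1..n} - S"] by (auto simp: B_def cntS_def)
    qed
    ultimately show "card (A S \<times> B S) = cnt Pa j * cnt Pb (n - j)" by (simp add: card_cartesian_product)
  qed simp
  also have "\<dots> = (n choose j) * cnt Pa j * cnt Pb (n - j)"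
    using n_subsets[of "{1..n}" j] by simp
  finally show ?thesis .
qed

lemma split_count:
  fixes \<Phi> :: "nat list \<Rightarrow> bool" and Pa Pb :: "nat \<Rightarrow> nat list \<Rightarrow> bool"
  assumes H: "\<And>\<alpha> \<beta>. distinct (\<alpha> @ \<beta>) \<Longrightarrow> set (\<alpha> @ \<beta>) = {1..n} \<Longrightarrow>
                \<Phi> (\<alpha> @ Suc n # \<beta>) = (Pa (length \<alpha>) \<alpha> \<and> Pb (length \<alpha>) \<beta>)"
  and Ia: "\<And>j. relinv (Pa j)" and Ib: "\<And>j. relinv (Pb j)"
  shows "cnt \<Phi> (Suc n) = (\<Sum>j=0..n. (n choose j) * cnt (Pa j) j * cnt (Pb j) (n - j))"
proof -
  define X where "X j = {(\<alpha>, \<beta>). distinct (\<alpha> @ \<beta>) \<and> set (\<alpha> @ \<beta>) = {1..n} \<and> length \<alpha> = j \<and> Pa j \<alpha> \<and> Pb j \<beta>}" for j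
  define F where "F = (\<lambda>(\<alpha>::nat list, \<beta>::nat list). \<alpha> @ Suc n # \<beta>)"
  have E: "{xs \<in> perms_of (Suc n). \<Phi> xs} = F ` (\<Union>j\<in>{0..n}. X j)"
  proof
    show "{xs \<in> perms_of (Suc n). \<Phi> xs} \<subseteq> F ` (\<Union>j\<in>{0..n}. X j)"
    proof
      fix xs assume xs: "xs \<in> {xs \<in> perms_of (Suc n). \<Phi> xs}"
      then have "Suc n \<in> set xs" by (auto simp: perms_of_def)
      then obtain \<alpha> \<beta> where sp: "xs = \<alpha> @ Suc n # \<beta>" by (meson split_list)
      have d: "distinct (\<alpha> @ \<beta>)" "Suc n \<notin> set \<alpha>" "Suc n \<notin> set \<beta>" using xs sp by (auto simp: perms_of_def)
      have s: "set (\<alpha> @ \<beta>) = {1..n}"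
      proof -
        have "set xs = {1..Suc n}" using xs by (simp add: perms_of_def)
        then have i: "insert (Suc n) (set (\<alpha> @ \<beta>)) = {1..Suc n}" using sp by auto
        have "Suc n \<notin> set (\<alpha> @ \<beta>)" using d by simp
        then have "set (\<alpha> @ \<beta>) = {1..Suc n} - {Suc n}" using i by (metis Diff_insert_absorb)
        also have "\<dots> = {1..n}" by auto
        finally show ?thesis .
      qed
      have l: "length \<alpha> \<le> n" using distinct_len_le[of \<alpha> n] d s by auto
      have "(\<alpha>, \<beta>) \<in> X (length \<alpha>)" using H[OF d(1) s] xs sp d s by (auto simp: X_def)
      then show "xs \<in> F ` (\<Union>j\<in>{0..n}. X j)" using l sp by (force simp: F_def)
    qed
  next
    show "F ` (\<Union>j\<in>{0..n}. X j) \<subseteq> {xs \<in> perms_of (Suc n). \<Phi> xs}"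
    proof
      fix xs assume "xs \<in> F ` (\<Union>j\<in>{0..n}. X j)"
      then obtain \<alpha> \<beta> j where xs: "xs = \<alpha> @ Suc n # \<beta>" and h: "distinct (\<alpha> @ \<beta>)" "set (\<alpha> @ \<beta>) = {1..n}"
        "length \<alpha> = j" "Pa j \<alpha>" "Pb j \<beta>" by (auto simp: F_def X_def)
      have "Suc n \<notin> set (\<alpha> @ \<beta>)" using h by auto
      then have "distinct xs" using h xs by auto
      moreover have "set xs = {1..Suc n}" using h xs by (auto simp: atLeastAtMostSuc_conv)
      moreover have "\<Phi> xs" using H[OF h(1,2)] h xs by simp
      ultimately show "xs \<in> {xs \<in> perms_of (Suc n). \<Phi> xs}" by (simp add: perms_of_def)
    qed
  qed
  have inj: "inj_on F (\<Union>j\<in>{0..n}. X j)"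
  proof (rule inj_onI)
    fix p q assume p: "p \<in> (\<Union>j\<in>{0..n}. X j)" and q: "q \<in> (\<Union>j\<in>{0..n}. X j)" and e: "F p = F q"
    obtain \<alpha> \<beta> where pp: "p = (\<alpha>, \<beta>)" by (cases p)
    obtain \<alpha>' \<beta>' where qq: "q = (\<alpha>', \<beta>')" by (cases q)
    have s1: "set (\<alpha> @ \<beta>) = {1..n}" "set (\<alpha>' @ \<beta>') = {1..n}" using p q pp qq by (auto simp: X_def)
    have "set \<alpha> \<subseteq> set (\<alpha> @ \<beta>)" "set \<beta> \<subseteq> set (\<alpha> @ \<beta>)" by auto
    then have "Suc n \<notin> set \<alpha>" "Suc n \<notin> set \<beta>" unfolding s1 by auto
    then show "p = q" using e pp qq by (simp add: F_def append_Cons_eq_iff)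
  qed
  have finX: "finite (X j)" for j
  proof (rule finite_subset[OF _ finite_cartesian_product[OF fin_lists[of n] fin_lists[of n]]])
    show "X j \<subseteq> {xs. set xs \<subseteq> {1..n} \<and> length xs \<le> n} \<times> {xs. set xs \<subseteq> {1..n} \<and> length xs \<le> n}"
      using distinct_len_le by (auto simp: X_def)
  qed
  have "cnt \<Phi> (Suc n) = card (\<Union>j\<in>{0..n}. X j)"
    unfolding cnt_def E by (rule card_image[OF inj])
  also have "\<dots> = (\<Sum>j=0..n. card (X j))"
    by (rule card_UN_disjoint) (simp, simp add: finX, auto simp: X_def)
  also have "\<dots> = (\<Sum>j=0..n. (n choose j) * cnt (Pa j) j * cnt (Pb j) (n - j))"
    by (rule sum.cong) (simp, unfold X_def, rule card_X[OF Ia Ib], simp)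
  finally show ?thesis .
qed



lemma f_count_cnt: "f_count n = cnt (goodp 0) n"
  by (simp add: f_count_def cnt_def goodp_def)

definition Phi_e :: "nat list \<Rightarrow> bool" where
  "Phi_e xs \<longleftrightarrow> goodp 0 xs \<and> xs \<noteq> [] \<and> (if odd (length xs) then \<not> ends_desc xs else ends_desc xs)"
definition ecnt :: "nat \<Rightarrow> nat" where "ecnt m = cnt Phi_e m"

lemma cnt_cong: "(\<And>xs. xs \<in> perms_of m \<Longrightarrow> P xs = Q xs) \<Longrightarrow> cnt P m = cnt Q m"
  unfolding cnt_def by (metis (mono_tags, lifting) Collect_cong)

lemma perms_len: "xs \<in> perms_of m \<Longrightarrow> length xs = m"
  by (auto simp: perms_of_def dest: distinct_card)

lemma perms_0: "perms_of 0 = {[]}" by (auto simp: perms_of_def)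

lemma cnt_0: "cnt P 0 = (if P [] then 1 else 0)"
proof -
  have "{xs \<in> perms_of 0. P xs} = (if P [] then {[]} else {})" by (auto simp: perms_0)
  then show ?thesis by (simp add: cnt_def)
qed

lemma goodp_nil: "goodp p []" by (simp add: goodp_def is_peak_def is_valley_def)

lemma cnt_nil: "cnt (\<lambda>\<beta>. \<beta> = []) m = (if m = 0 then 1 else 0)"
proof (cases m)
  case 0 then show ?thesis by (simp add: cnt_0)
next
  case (Suc k)
  then have "{xs \<in> perms_of m. xs = []} = {}" by (auto simp: perms_of_def)
  then show ?thesis using Suc by (simp add: cnt_def)
qed

lemma cnt_false: "cnt (\<lambda>_. False) m = 0" by (simp add: cnt_def)

lemma relinv_goodp: "relinv (goodp p)" by (simp add: relinv_def goodp_map)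

lemma compl_facts:
  assumes "xs \<in> perms_of m"
  shows "goodp p (map (\<lambda>x. Suc m - x) xs) = goodp (Suc p) xs"
    "ends_desc (map (\<lambda>x. Suc m - x) xs) = ends_asc xs"
    "length (map (\<lambda>x. Suc m - x) xs) = length xs"
  using antion_compl[OF assms] by (simp_all add: goodp_map_anti ends_desc_map_anti)

lemma cnt_goodp1: "cnt (goodp 1) m = cnt (goodp 0) m"
proof -
  have "cnt (goodp 0) m = cnt (\<lambda>xs. goodp 0 (map (\<lambda>x. Suc m - x) xs)) m" by (rule cnt_compl)
  also have "\<dots> = cnt (goodp 1) m" by (rule cnt_cong) (simp add: compl_facts)
  finally show ?thesis by simp
qed

lemma cnt_goodp1': "cnt (goodp (Suc 0)) m = cnt (goodp 0) m" using cnt_goodp1 by simp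

lemma asc_desc: "distinct xs \<Longrightarrow> 2 \<le> length xs \<Longrightarrow> ends_asc xs \<longleftrightarrow> \<not> ends_desc xs"
proof -
  assume d: "distinct xs" and l: "2 \<le> length xs"
  have "xs ! (length xs - 2) \<noteq> xs ! (length xs - 1)" using d l by (simp add: nth_eq_iff_index_eq)
  then show ?thesis using l by (auto simp: ends_asc_def ends_desc_def)
qed

lemma f0: "f_count 0 = 1" by (simp add: f_count_cnt cnt_0 goodp_nil)
lemma e0: "ecnt 0 = 0" by (simp add: ecnt_def cnt_0 Phi_e_def)

lemma set_less: "set (\<alpha> @ \<beta>) = {1..n} \<Longrightarrow> (\<forall>x\<in>set \<alpha>. x < Suc n) \<and> (\<forall>x\<in>set \<beta>. x < Suc n)"
proof -
  assume s: "set (\<alpha> @ \<beta>) = {1..n}"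
  have "set \<alpha> \<subseteq> set (\<alpha> @ \<beta>)" "set \<beta> \<subseteq> set (\<alpha> @ \<beta>)" by auto
  then show ?thesis unfolding s by auto
qed

lemma R1: "f_count (Suc n) = (\<Sum>j=0..n. if even j then (n choose j) * f_count j * f_count (n-j) else 0)
              + (if odd n then ecnt n else 0)"
proof -
  define Pa where "Pa j = (if even j then goodp 0 else (\<lambda>\<alpha>. goodp 0 \<alpha> \<and> \<not> ends_desc \<alpha>))" for j :: nat
  define Pb where "Pb j = (if even j then goodp 1 else (\<lambda>\<beta>::nat list. \<beta> = []))" for j :: nat
  have H: "goodp 0 (\<alpha> @ Suc n # \<beta>) = (Pa (length \<alpha>) \<alpha> \<and> Pb (length \<alpha>) \<beta>)"
    if "distinct (\<alpha> @ \<beta>)" "set (\<alpha> @ \<beta>) = {1..n}" for \<alpha> \<beta>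
  proof -
    have a: "\<forall>x\<in>set \<alpha>. x < Suc n" "\<forall>x\<in>set \<beta>. x < Suc n" using set_less[OF that(2)] by auto
    show ?thesis
    proof (cases "even (length \<alpha>)")
      case True
      then show ?thesis unfolding goodp_split[OF a] Pa_def Pb_def
        using goodp_odd[of "0 + length \<alpha> + 1" \<beta>] by simp
    next
      case False
      then show ?thesis unfolding goodp_split[OF a] Pa_def Pb_def
        using goodp_even[of "0 + length \<alpha> + 1" \<beta>]
        by (auto simp: goodp_nil starts_asc_def Suc_le_eq)
    qed
  qed
  have Ia: "relinv (Pa j)" for j :: nat
    by (auto simp: Pa_def relinv_def goodp_map ends_desc_map)
  have Ib: "relinv (Pb j)" for j :: nat
    by (auto simp: Pb_def relinv_def goodp_map)
  have "f_count (Suc n) = (\<Sum>j=0..n. (n choose j) * cnt (Pa j) j * cnt (Pb j) (n - j))"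
    unfolding f_count_cnt by (rule split_count[OF H Ia Ib]) auto
  also have "\<dots> = (\<Sum>j=0..n. (if even j then (n choose j) * f_count j * f_count (n-j) else 0)
                     + (if j = n \<and> odd n then ecnt n else 0))"
  proof (rule sum.cong)
    fix j assume j: "j \<in> {0..n}"
    show "(n choose j) * cnt (Pa j) j * cnt (Pb j) (n - j) = (if even j then (n choose j) * f_count j * f_count (n-j) else 0)
                     + (if j = n \<and> odd n then ecnt n else 0)"
    proof (cases "even j")
      case True
      then show ?thesis by (auto simp: Pa_def Pb_def f_count_cnt cnt_goodp1 cnt_goodp1')
    next
      case False
      have "cnt (\<lambda>\<alpha>. goodp 0 \<alpha> \<and> \<not> ends_desc \<alpha>) j = ecnt j"
        unfolding ecnt_def using False
        by (intro cnt_cong) (auto simp: Phi_e_def dest: perms_len)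
      then show ?thesis using False j by (auto simp: Pa_def Pb_def cnt_nil)
    qed
  qed simp
  also have "\<dots> = (\<Sum>j=0..n. if even j then (n choose j) * f_count j * f_count (n-j) else 0)
              + (if odd n then ecnt n else 0)"
    by (simp add: sum.distrib sum.delta')
  finally show ?thesis .
qed

lemma cntPb:
  assumes ev: "ev = even m"
  shows "cnt (\<lambda>\<beta>. goodp 1 \<beta> \<and> (if ev then \<not> (length \<beta> = 1 \<or> ends_desc \<beta>) else (length \<beta> = 1 \<or> ends_desc \<beta>))) m
         = ecnt m + (if m = 0 then 1 else 0)"
proof -
  let ?Q = "\<lambda>\<beta>. goodp 1 \<beta> \<and> (if ev then \<not> (length \<beta> = 1 \<or> ends_desc \<beta>) else (length \<beta> = 1 \<or> ends_desc \<beta>))"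
  have "cnt ?Q m = cnt (\<lambda>xs. ?Q (map (\<lambda>x. Suc m - x) xs)) m" by (rule cnt_compl)
  also have "\<dots> = cnt (\<lambda>xs. goodp 0 xs \<and> (if ev then \<not> (m = 1 \<or> ends_asc xs) else (m = 1 \<or> ends_asc xs))) m"
  proof (rule cnt_cong)
    fix xs assume xs: "xs \<in> perms_of m"
    have "goodp 2 xs = goodp 0 xs" by (rule goodp_even) simp
    then show "?Q (map (\<lambda>x. Suc m - x) xs) = (goodp 0 xs \<and> (if ev then \<not> (m = 1 \<or> ends_asc xs) else (m = 1 \<or> ends_asc xs)))"
      using compl_facts[OF xs] perms_len[OF xs] by (simp add: numeral_2_eq_2)
  qed
  also have "\<dots> = ecnt m + (if m = 0 then 1 else 0)"
  proof (cases "m = 0")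
    case True
    then show ?thesis using ev by (simp add: cnt_0 e0 goodp_nil ends_asc_def)
  next
    case False
    have "cnt (\<lambda>xs. goodp 0 xs \<and> (if ev then \<not> (m = 1 \<or> ends_asc xs) else (m = 1 \<or> ends_asc xs))) m = cnt Phi_e m"
    proof (rule cnt_cong)
      fix xs assume xs: "xs \<in> perms_of m"
      have l: "length xs = m" by (rule perms_len[OF xs])
      have d: "distinct xs" using xs by (simp add: perms_of_def)
      show "(goodp 0 xs \<and> (if ev then \<not> (m = 1 \<or> ends_asc xs) else (m = 1 \<or> ends_asc xs))) = Phi_e xs"
      proof (cases "m = 1")
        case True
        then show ?thesis using ev l by (auto simp: Phi_e_def ends_desc_def)
      next
        case m1: False
        then have "2 \<le> length xs" using l False by auto
        then show ?thesis using asc_desc[OF d] ev l False m1 by (auto simp: Phi_e_def)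
      qed
    qed
    then show ?thesis using False by (simp add: ecnt_def)
  qed
  finally show ?thesis .
qed

lemma R2: "ecnt (Suc n) = (\<Sum>j=0..n. if even j then (n choose j) * f_count j * ecnt (n-j) else 0)
              + (if even n then f_count n else 0)"
proof -
  define Pa where "Pa j = (if even j then goodp 0 else (\<lambda>_::nat list. False))" for j :: nat
  define Pb where "Pb j = (if even j then (\<lambda>\<beta>. goodp 1 \<beta> \<and> (if even n then \<not> (length \<beta> = 1 \<or> ends_desc \<beta>) else (length \<beta> = 1 \<or> ends_desc \<beta>)))
                          else (\<lambda>_::nat list. False))" for j :: nat
  have H: "Phi_e (\<alpha> @ Suc n # \<beta>) = (Pa (length \<alpha>) \<alpha> \<and> Pb (length \<alpha>) \<beta>)"
    if d: "distinct (\<alpha> @ \<beta>)" and s: "set (\<alpha> @ \<beta>) = {1..n}" for \<alpha> \<beta>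
  proof -
    have a: "\<forall>x\<in>set \<alpha>. x < Suc n" "\<forall>x\<in>set \<beta>. x < Suc n" using set_less[OF s] by auto
    have len: "length \<alpha> + length \<beta> = n"
      using distinct_card[OF d] s by simp
    have ed: "ends_desc (\<alpha> @ Suc n # \<beta>) = (length \<beta> = 1 \<or> ends_desc \<beta>)" by (rule ends_desc_split[OF a])
    show ?thesis
    proof (cases "even (length \<alpha>)")
      case True
      then show ?thesis unfolding Phi_e_def goodp_split[OF a] Pa_def Pb_def ed
        using goodp_odd[of "0 + length \<alpha> + 1" \<beta>] len by auto
    next
      case False
      then have l1: "Suc 0 \<le> length \<alpha>" by (cases "length \<alpha>") auto
      show ?thesis unfolding Phi_e_def goodp_split[OF a] Pa_def Pb_def ed
        using len False l1 by (auto simp: ends_desc_def)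
    qed
  qed
  have Ia: "relinv (Pa j)" for j :: nat
    by (auto simp: Pa_def relinv_def goodp_map)
  have Ib: "relinv (Pb j)" for j :: nat
    by (auto simp: Pb_def relinv_def goodp_map ends_desc_map)
  have "ecnt (Suc n) = (\<Sum>j=0..n. (n choose j) * cnt (Pa j) j * cnt (Pb j) (n - j))"
    unfolding ecnt_def by (rule split_count[OF H Ia Ib]) auto
  also have "\<dots> = (\<Sum>j=0..n. (if even j then (n choose j) * f_count j * ecnt (n-j) else 0)
                     + (if j = n \<and> even n then f_count n else 0))"
  proof (rule sum.cong)
    fix j assume j: "j \<in> {0..n}"
    show "(n choose j) * cnt (Pa j) j * cnt (Pb j) (n - j) = (if even j then (n choose j) * f_count j * ecnt (n-j) else 0)
                     + (if j = n \<and> even n then f_count n else 0)"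
    proof (cases "even j")
      case True
      have "even n = even (n - j)" using True j by auto
      note par = this
      have pb: "Pb j = (\<lambda>\<beta>. goodp 1 \<beta> \<and> (if even n then \<not> (length \<beta> = 1 \<or> ends_desc \<beta>) else (length \<beta> = 1 \<or> ends_desc \<beta>)))"
        using True by (simp add: Pb_def)
      have "cnt (Pb j) (n - j) = ecnt (n - j) + (if n - j = 0 then 1 else 0)"
        unfolding pb by (rule cntPb[OF par])
      then show ?thesis using True j by (auto simp: Pa_def f_count_cnt algebra_simps)
    next
      case False
      then show ?thesis using j by (auto simp: Pa_def Pb_def cnt_false)
    qed
  qed simp
  also have "\<dots> = (\<Sum>j=0..n. if even j then (n choose j) * f_count j * ecnt (n-j) else 0)
              + (if even n then f_count n else 0)"
    by (simp add: sum.distrib sum.delta')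
  finally show ?thesis .
qed


theorem mainTheorem5:
  shows "Abs_fps (\<lambda>n. real (f_count n) / fact n) =
           inverse (Abs_fps (\<lambda>k. if k mod 3 = 0 then euler_number k / fact k
                                 else if k mod 3 = 1 then - (euler_number k / fact k)
                                 else 0))
       \<and> Abs_fps (\<lambda>n. real (f_count n) / fact n) =
           (3 * fps_sin (1/2) + 3 * ((fps_exp (sqrt 3 / 2) + fps_exp (- (sqrt 3 / 2))) / 2)) /
           (3 * fps_cos (1/2) - fps_const (sqrt 3) * ((fps_exp (sqrt 3 / 2) - fps_exp (- (sqrt 3 / 2))) / 2))"
  by (rule analytic_main[OF R1 R2 f0 e0])

end
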